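(* Let $q$ be a prime power, let $p$ be the characteristic of $\mathbb{F}_q$, and let $r = 2n+1$ be a prime such that $q$ is a primitive root modulo $r$. Let $\beta \in \mathbb{F}_{q^{2n}}$ be a primitive $r$th root of unity and put $\alpha = \beta + \beta^{-1} \in \mathbb{F}_{q^n}$. Then the multiplicative order $L_n$ of $\alpha$ satisfies $$L_n \geqslant P(n-1, p-1).$$
   Context: For integers $s \geqslant 1$ and $v \geqslant 0$, $P(s,v)$ denotes the number of integer partitions of $s$ in which each part appears at most $v$ times, i.e. the number of solutions of $\sum_{j=1}^{s} u_j j = s$ in non-negative integers $u_1,\ldots,u_s \leqslant v$. The element $\alpha$ is called a Gauss period of type $(n,2)$. *)

theory Defs
  imports "HOL-Number_Theory.Number_Theory"
begin

definition mult_order :: "'a::field \<Rightarrow> nat" where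
  "mult_order x = (if \<exists>k>0. x ^ k = 1 then (LEAST k. k > 0 \<and> x ^ k = 1) else 0)"

text \<open>P(s,v): number of partitions of s in which each part appears at most v times,
  i.e. the number of (u_1,...,u_s) with 0 \<le> u_j \<le> v and \<Sum> u_j * j = s
  (u is extended by 0 outside {1..s}).\<close>
definition part_count :: "nat \<Rightarrow> nat \<Rightarrow> nat" where
  "part_count s v = card {u :: nat \<Rightarrow> nat.
      (\<forall>j. (j < 1 \<or> s < j) \<longrightarrow> u j = 0) \<and>
      (\<forall>j\<in>{1..s}. u j \<le> v) \<and>
      (\<Sum>j=1..s. u j * j) = s}"

end

theory Submission
  imports Defs "HOL-Computational_Algebra.Polynomial"
begin

lemma binom_dvd:
  fixes X :: "'b::comm_ring_1"
  shows "X^2 dvd ((1+X)^k - 1 - of_nat k * X)"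
proof (induction k)
  case 0 then show ?case by simp
next
  case (Suc k)
  then obtain D where D: "(1+X)^k - 1 - of_nat k * X = X^2 * D" by (auto elim: dvdE)
  have E: "(1+X)^k = 1 + of_nat k * X + X^2 * D" using D by (simp add: algebra_simps)
  have "(1+X)^Suc k - 1 - of_nat (Suc k) * X = X^2 * ((1+X)*D + of_nat k)"
    by (simp add: E algebra_simps power2_eq_square)
  then show ?case by simp
qed

lemma pow_dvd1:
  fixes A :: "'b::comm_ring_1"
  assumes "Z dvd (A - 1)" shows "Z dvd (A^k - 1)"
proof (induction k)
  case 0 then show ?case by simp
next
  case (Suc k)
  have "A^Suc k - 1 = A * (A^k - 1) + (A - 1)" by (simp add: algebra_simps)
  then show ?case using Suc assms by (metis dvd_add dvd_mult)
qed

lemma prod_dvd1: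
  fixes f :: "'c \<Rightarrow> 'b::comm_ring_1"
  assumes "\<forall>x\<in>S. Z dvd (f x - 1)" shows "Z dvd (prod f S - 1)"
  using assms
proof (induction S rule: infinite_finite_induct)
  case (insert x F)
  have "prod f (insert x F) - 1 = f x * (prod f F - 1) + (f x - 1)"
    using insert by (simp add: algebra_simps)
  then show ?case using insert by (metis dvd_add dvd_mult insert_iff)
qed auto

lemma coeff_key:
  fixes R :: "'b::comm_ring_1 poly"
  assumes "a > 0" "monom 1 (Suc a) dvd (R - 1)"
  shows "coeff ((1 + monom 1 a)^k * R) a = of_nat k"
proof -
  let ?X = "monom (1::'b) a" let ?Z = "monom (1::'b) (Suc a)"
  have "?Z dvd ?X^2"
  proof -
    have "?X^2 = ?Z * monom 1 (a - 1)" using assms(1)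
      by (simp add: power2_eq_square mult_monom)
    then show ?thesis by simp
  qed
  then have d1: "?Z dvd ((1+?X)^k - 1 - of_nat k * ?X)" using binom_dvd dvd_trans by blast
  then obtain D1 where D1: "(1+?X)^k = 1 + of_nat k * ?X + D1" "?Z dvd D1"
    by (metis add_diff_cancel_left' diff_add_cancel diff_diff_eq)
  obtain D2 where D2: "R = 1 + D2" "?Z dvd D2" using assms(2)
    by (metis add.commute diff_add_cancel)
  have "(1+?X)^k * R = 1 + of_nat k * ?X + (D2 + of_nat k * ?X * D2 + D1 * R)"
    by (simp add: D1 D2 algebra_simps)
  moreover have "?Z dvd (D2 + of_nat k * ?X * D2 + D1 * R)"
    using D1(2) D2(2) by (simp add: dvd_add dvd_mult)
  then obtain T where "D2 + of_nat k * ?X * D2 + D1 * R = ?Z * T" by (auto elim: dvdE)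
  ultimately have "(1+?X)^k * R = 1 + of_nat k * ?X + ?Z * T" by simp
  then show ?thesis using assms(1) by (simp add: coeff_monom_mult of_nat_poly)
qed

lemma F_inj:
  fixes u v :: "nat \<Rightarrow> nat"
  assumes lt: "\<forall>j\<in>{1..N}. u j < CHAR('b) \<and> v j < CHAR('b)"
   and eq: "(\<Prod>j\<in>{1..N}. (1 + monom (1::'b::field) (2*j))^(u j)) = (\<Prod>j\<in>{1..N}. (1 + monom 1 (2*j))^(v j))"
  shows "\<forall>j\<in>{1..N}. u j = v j"
proof (rule ccontr)
  assume "\<not> ?thesis"
  then have ex: "\<exists>j. j \<in> {1..N} \<and> u j \<noteq> v j" by blast
  define j0 where "j0 = (LEAST j. j \<in> {1..N} \<and> u j \<noteq> v j)"
  have j0: "j0 \<in> {1..N} \<and> u j0 \<noteq> v j0" unfolding j0_def using ex by (rule LeastI_ex)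
  have below: "\<forall>j\<in>{1..<j0}. u j = v j"
  proof
    fix j assume "j \<in> {1..<j0}"
    then have "j < j0" "j \<in> {1..N}" using j0 by auto
    then show "u j = v j" using not_less_Least[of j "\<lambda>j. j \<in> {1..N} \<and> u j \<noteq> v j"] j0_def by blast
  qed
  define f where "f = (\<lambda>w j. (1 + monom (1::'b) (2*j))^(w j))"
  have split: "prod (f w) {1..N} = prod (f w) {1..<j0} * (f w j0 * prod (f w) {j0<..N})" for w
  proof -
    have "{1..N} = {1..<j0} \<union> ({j0} \<union> {j0<..N})" using j0 by auto
    then have "prod (f w) {1..N} = prod (f w) ({1..<j0} \<union> ({j0} \<union> {j0<..N}))" by simp
    also have "\<dots> = prod (f w) {1..<j0} * prod (f w) ({j0} \<union> {j0<..N})"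
      by (rule prod.union_disjoint) auto
    also have "prod (f w) ({j0} \<union> {j0<..N}) = f w j0 * prod (f w) {j0<..N}"
      by (subst prod.union_disjoint) auto
    finally show ?thesis .
  qed
  have eqlow: "prod (f u) {1..<j0} = prod (f v) {1..<j0}"
    using below by (intro prod.cong) (auto simp: f_def)
  have nz1: "(1 + monom (1::'b) (2*j)) \<noteq> 0" if "j \<ge> 1" for j
  proof
    assume "1 + monom (1::'b) (2*j) = 0"
    then have "coeff (1 + monom (1::'b) (2*j)) 0 = 0" by simp
    then show False using that by simp
  qed
  have nz: "prod (f v) {1..<j0} \<noteq> 0" using nz1 by (auto simp: f_def)
  have main: "f u j0 * prod (f u) {j0<..N} = f v j0 * prod (f v) {j0<..N}"
  proof -
    have eq': "prod (f u) {1..N} = prod (f v) {1..N}" using eq by (simp add: f_def)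
    then have "prod (f v) {1..<j0} * (f u j0 * prod (f u) {j0<..N}) = prod (f v) {1..<j0} * (f v j0 * prod (f v) {j0<..N})"
      using split[of u] split[of v] eqlow by simp
    then show ?thesis using nz by simp
  qed
  have dv: "monom (1::'b) (Suc (2*j0)) dvd (prod (f w) {j0<..N} - 1)" for w
    unfolding f_def
  proof (intro prod_dvd1 ballI pow_dvd1)
    fix j assume "j \<in> {j0<..N}"
    then have "monom (1::'b) (2*j) = monom 1 (Suc (2*j0)) * monom 1 (2*j - Suc (2*j0))"
      by (simp add: mult_monom)
    then show "monom (1::'b) (Suc (2*j0)) dvd (1 + monom 1 (2*j) - 1)" by simp
  qed
  have "coeff (f u j0 * prod (f u) {j0<..N}) (2*j0) = of_nat (u j0)"
    unfolding f_def by (rule coeff_key) (use j0 dv in \<open>auto simp: f_def\<close>)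
  moreover have "coeff (f v j0 * prod (f v) {j0<..N}) (2*j0) = of_nat (v j0)"
    unfolding f_def by (rule coeff_key) (use j0 dv in \<open>auto simp: f_def\<close>)
  ultimately have "(of_nat (u j0) :: 'b) = of_nat (v j0)" using main by simp
  then have "[u j0 = v j0] (mod CHAR('b))" by (simp add: of_nat_eq_iff_cong_CHAR)
  then have "u j0 = v j0" using lt j0 by (simp add: cong_def)
  then show False using j0 by simp
qed

lemma frob_poly:
  fixes x :: "'b::comm_ring_1"
  assumes fr: "\<forall>a b::'b. (a+b)^Q = a^Q + b^Q"
  shows "poly (\<Prod>j\<in>S. (1 + monom 1 (2*j))^(u j)) (x^Q) = (poly (\<Prod>j\<in>S. (1 + monom 1 (2*j))^(u j)) x)^Q"
proof -
  have "poly (\<Prod>j\<in>S. (1 + monom 1 (2*j))^(u j)) (x^Q) = (\<Prod>j\<in>S. (1 + (x^Q)^(2*j))^(u j))"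
    by (simp add: poly_prod poly_monom)
  also have "\<dots> = (\<Prod>j\<in>S. ((1 + x^(2*j))^(u j))^Q)"
  proof (rule prod.cong)
    fix j
    have "(1 + x^(2*j))^Q = 1 + (x^Q)^(2*j)" using fr by (simp add: power_mult[symmetric] mult.commute)
    then have "(1 + (x^Q)^(2*j))^(u j) = ((1 + x^(2*j))^Q)^(u j)" by simp
    also have "\<dots> = ((1 + x^(2*j))^(u j))^Q" by (simp only: power_mult[symmetric] mult.commute)
    finally show "(1 + (x^Q)^(2*j))^(u j) = ((1 + x^(2*j))^(u j))^Q" .
  qed simp
  also have "\<dots> = (poly (\<Prod>j\<in>S. (1 + monom 1 (2*j))^(u j)) x)^Q"
    by (simp add: poly_prod poly_monom prod_power_distrib)
  finally show ?thesis .
qed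

lemma degree_F:
  assumes "finite S"
  shows "degree (\<Prod>j\<in>S. (1 + monom (1::'b::comm_ring_1) (2*j))^(u j)) \<le> 2 * (\<Sum>j\<in>S. u j * j)"
proof -
  have "degree (\<Prod>j\<in>S. (1 + monom (1::'b) (2*j))^(u j)) \<le> (\<Sum>j\<in>S. degree ((1 + monom (1::'b) (2*j))^(u j)))"
    using degree_prod_sum_le[OF assms] by (simp add: o_def)
  also have "\<dots> \<le> (\<Sum>j\<in>S. 2 * (u j * j))"
  proof (rule sum_mono)
    fix j
    have "degree (1 + monom (1::'b) (2*j)) \<le> 2*j"
      using degree_add_le_max[of 1 "monom (1::'b) (2*j)"] degree_monom_le[of "1::'b" "2*j"] by simp
    then have "degree ((1 + monom (1::'b) (2*j))^(u j)) \<le> 2*j * u j"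
      using degree_power_le[of "1 + monom (1::'b) (2*j)" "u j"] mult_le_mono1 order_trans by blast
    then show "degree ((1 + monom (1::'b) (2*j))^(u j)) \<le> 2 * (u j * j)" by (simp add: mult.commute mult.left_commute)
  qed
  finally show ?thesis by (simp add: sum_distrib_left)
qed

lemma pow_mod_r:
  fixes x :: "'b::monoid_mult"
  assumes "x^r = 1" shows "x^e = x^(e mod r)"
proof -
  have "x^e = x^(r * (e div r) + e mod r)" by simp
  also have "\<dots> = x^(e mod r)" by (simp only: power_add power_mult assms power_one mult_1_left)
  finally show ?thesis .
qed

lemma mo_facts:
  fixes x :: "'b::field"
  assumes "mult_order x = r" "r > 0"
  shows "x^r = 1" "\<forall>i. 0 < i \<and> i < r \<longrightarrow> x^i \<noteq> 1"
proof -
  have ex: "\<exists>k>0. x ^ k = 1" using assms by (auto simp: mult_order_def split: if_splits)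
  then have r: "r = (LEAST k. k > 0 \<and> x ^ k = 1)" using assms by (simp add: mult_order_def)
  show "x^r = 1" unfolding r using LeastI_ex[of "\<lambda>k. k > 0 \<and> x ^ k = 1"] ex by blast
  show "\<forall>i. 0 < i \<and> i < r \<longrightarrow> x^i \<noteq> 1" unfolding r using not_less_Least by blast
qed

lemma mo_finite:
  fixes x :: "'b::{field,finite}"
  assumes "x \<noteq> 0"
  shows "mult_order x > 0 \<and> x ^ mult_order x = 1"
proof -
  have "\<not> inj (\<lambda>k::nat. x^k)"
  proof
    assume "inj (\<lambda>k::nat. x^k)"
    then have "finite (UNIV :: nat set)" using finite_imageD[of "\<lambda>k::nat. x^k" UNIV] by simp
    then show False by simp
  qed
  then obtain i j :: nat where ij: "x^i = x^j" "i < j"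
    unfolding inj_def by (metis linorder_neqE_nat)
  have "x^i * x^(j-i) = x^j" using ij(2) by (simp flip: power_add)
  then have "x^i * x^(j-i) = x^i * 1" using ij(1) by simp
  then have "x^(j-i) = 1" using assms by simp
  then have ex: "\<exists>k>0. x ^ k = 1" using ij by (intro exI[of _ "j-i"]) auto
  then have "mult_order x = (LEAST k. k > 0 \<and> x ^ k = 1)" by (simp add: mult_order_def)
  then show ?thesis using LeastI_ex[of "\<lambda>k. k > 0 \<and> x ^ k = 1"] ex by simp
qed

lemma pow_inj_r:
  fixes x :: "'b::field"
  assumes "\<forall>i. 0 < i \<and> i < r \<longrightarrow> x^i \<noteq> 1" "x \<noteq> 0" "a < r" "b < r" "x^a = x^b"
  shows "a = b"
proof (rule ccontr)
  assume ne: "a \<noteq> b"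
  have *: "x^c = x^d \<Longrightarrow> c < d \<Longrightarrow> d < r \<Longrightarrow> False" for c d
  proof -
    assume h: "x^c = x^d" "c < d" "d < r"
    have "x^c * x^(d-c) = x^d" using h(2) by (simp flip: power_add)
    then have "x^c * x^(d-c) = x^c * 1" using h(1) by simp
    then have "x^(d-c) = 1" using assms(2) by simp
    then show False using assms(1) h by auto
  qed
  show False using ne assms(3-5) *[of a b] *[of b a] by (metis linorder_neqE_nat)
qed

theorem theorem1:
  fixes q p m n r :: nat and \<beta> :: "'a::{field, finite}"
  assumes "prime p" and "m > 0" and "q = p ^ m"
    and "CHAR('a) = p"
    and "card (UNIV :: 'a set) = q ^ (2 * n)"
    and "r = 2 * n + 1" and "prime r"
    and "residue_primroot r q"
    and "mult_order \<beta> = r"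
  shows "mult_order (\<beta> + inverse \<beta>) \<ge> part_count (n - 1) (p - 1)"
proof -
  define \<alpha> where "\<alpha> = \<beta> + inverse \<beta>"
  define N where "N = n - 1"
  have r1: "r > 1" using assms(7) prime_gt_1_nat by blast
  have n1: "n \<ge> 1" using r1 assms(6) by simp
  have NN: "N < n" "2 * N + 2 = 2 * n" using n1 by (auto simp: N_def)
  have r3: "2 < r" using n1 assms(6) by simp
  have br: "\<beta>^r = 1" and bmin: "\<forall>i. 0 < i \<and> i < r \<longrightarrow> \<beta>^i \<noteq> 1"
    using mo_facts[OF assms(9)] r1 by auto
  have b0: "\<beta> \<noteq> 0" using br r1 by (cases "\<beta> = 0") (auto simp: power_0_left)
  have ibr: "(inverse \<beta>)^r = 1" by (simp add: power_inverse br)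
  have a0: "\<alpha> \<noteq> 0"
  proof
    assume "\<alpha> = 0"
    then have "\<beta> * \<alpha> = 0" by simp
    then have "\<beta>^2 + 1 = 0" using b0 by (simp add: \<alpha>_def algebra_simps power2_eq_square)
    then have b2: "\<beta>^2 = -1" by (simp add: eq_neg_iff_add_eq_0)
    have "\<beta>^(4*n) = (\<beta>^2)^(2*n)" unfolding power_mult[symmetric] by simp
    then have "\<beta>^(4*n) = 1" by (simp add: b2)
    have "\<beta>^(2*r) = (\<beta>^r)^2" unfolding power_mult[symmetric] by (simp add: mult.commute)
    then have "\<beta>^(2*r) = 1" by (simp add: br)
    moreover have "\<beta>^(2*r) = \<beta>^(4*n) * \<beta>^2" using assms(6) by (simp flip: power_add)
    ultimately have "\<beta>^2 = 1" using \<open>\<beta>^(4*n) = 1\<close> by simp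
    then show False using bmin r3 by auto
  qed
  define L where "L = mult_order \<alpha>"
  have L: "L > 0" "\<alpha>^L = 1" using mo_finite[OF a0] by (auto simp: L_def)
  have pc: "prime CHAR('a)" using assms(1,4) by simp
  have frob: "(a + b)^(q^k) = a^(q^k) + b^(q^k)" for k and a b :: 'a
    by (rule freshmans_dream'[OF pc, of _ "m*k"]) (simp add: assms(3,4) power_mult)
  have gen: "bij_betw (\<lambda>i. q^i mod r) {..<2*n} {0<..<r}"
    using residue_primroot_is_generator[OF r1 assms(8)] assms(6,7)
    by (simp add: totient_prime totatives_prime)
  have ak: "\<exists>k. \<beta>^j + inverse \<beta> ^ j = \<alpha>^(q^k)" if "j \<in> {1..n}" for j
  proof -
    have "j \<in> {0<..<r}" using that assms(6) by auto
    then have "j \<in> (\<lambda>i. q^i mod r) ` {..<2*n}" using gen unfolding bij_betw_def by simp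
    then obtain k where k: "q^k mod r = j" by auto
    have "\<alpha>^(q^k) = \<beta>^(q^k) + (inverse \<beta>)^(q^k)" unfolding \<alpha>_def by (rule frob)
    also have "\<dots> = \<beta>^j + (inverse \<beta>)^j"
      using pow_mod_r[OF br, of "q^k"] pow_mod_r[OF ibr, of "q^k"] k by simp
    finally show ?thesis by (intro exI[of _ k]) simp
  qed
  then obtain kk where kk: "\<forall>j\<in>{1..n}. \<beta>^j + inverse \<beta> ^ j = \<alpha>^(q^(kk j))" by metis
  define U where "U = {u :: nat \<Rightarrow> nat.
      (\<forall>j. (j < 1 \<or> N < j) \<longrightarrow> u j = 0) \<and>
      (\<forall>j\<in>{1..N}. u j \<le> p - 1) \<and>
      (\<Sum>j=1..N. u j * j) = N}"
  define E where "E u = (\<Prod>j\<in>{1..N}. (\<beta>^j + inverse \<beta> ^ j)^(u j))" for u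
  define Fp where "Fp u = (\<Prod>j\<in>{1..N}. (1 + monom (1::'a) (2*j))^(u j))" for u
  define B where "B = (\<lambda>i. \<alpha>^i) ` {..<L}"
  have EB: "E u \<in> B" for u
  proof -
    have "E u = (\<Prod>j\<in>{1..N}. \<alpha>^(q^(kk j) * u j))"
      unfolding E_def using kk NN by (intro prod.cong) (auto simp: power_mult)
    also have "\<dots> = \<alpha>^(\<Sum>j\<in>{1..N}. q^(kk j) * u j)" by (simp add: power_sum)
    also have "\<dots> = \<alpha>^((\<Sum>j\<in>{1..N}. q^(kk j) * u j) mod L)" by (rule pow_mod_r[OF L(2)])
    finally show ?thesis unfolding B_def using L(1) by auto
  qed
  have Epoly: "E u = (inverse \<beta>)^(\<Sum>j\<in>{1..N}. u j * j) * poly (Fp u) \<beta>" for u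
  proof -
    have "E u = (\<Prod>j\<in>{1..N}. ((inverse \<beta>)^(u j * j)) * (1 + \<beta>^(2*j))^(u j))"
      unfolding E_def
    proof (rule prod.cong)
      fix j
      have "inverse \<beta> ^ j * \<beta>^(2*j) = \<beta>^j" using b0
        by (simp add: mult_2 power_add power_inverse)
      then have "\<beta>^j + inverse \<beta> ^ j = inverse \<beta> ^ j * (1 + \<beta>^(2*j))"
        by (simp add: algebra_simps)
      then show "(\<beta>^j + inverse \<beta> ^ j)^(u j) = ((inverse \<beta>)^(u j * j)) * (1 + \<beta>^(2*j))^(u j)"
        by (simp add: power_mult_distrib power_mult mult.commute[of "u j"])
    qed simp
    also have "\<dots> = (inverse \<beta>)^(\<Sum>j\<in>{1..N}. u j * j) * poly (Fp u) \<beta>"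
      by (simp add: prod.distrib power_sum Fp_def poly_prod poly_monom)
    finally show ?thesis .
  qed
  have injb: "inj_on (\<lambda>k. \<beta>^(q^k)) {..<2*n}"
  proof
    fix k l assume kl: "k \<in> {..<2*n}" "l \<in> {..<2*n}" "\<beta>^(q^k) = \<beta>^(q^l)"
    have "\<beta>^(q^k mod r) = \<beta>^(q^l mod r)"
      using kl(3) pow_mod_r[OF br, of "q^k"] pow_mod_r[OF br, of "q^l"] by simp
    then have "q^k mod r = q^l mod r"
      using pow_inj_r[OF bmin b0, of "q^k mod r" "q^l mod r"] r1 by simp
    then show "k = l" using gen kl(1,2) unfolding bij_betw_def inj_on_def by blast
  qed
  have inj: "inj_on E U"
  proof
    fix u v assume uv: "u \<in> U" "v \<in> U" "E u = E v"
    have "poly (Fp u) \<beta> = poly (Fp v) \<beta>"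
      using uv Epoly[of u] Epoly[of v] b0 by (simp add: U_def)
    have rt: "poly (Fp u) (\<beta>^(q^k)) = poly (Fp v) (\<beta>^(q^k))" for k
    proof -
      have fr: "\<forall>a b::'a. (a+b)^(q^k) = a^(q^k) + b^(q^k)" using frob by blast
      show ?thesis unfolding Fp_def frob_poly[OF fr] using \<open>poly (Fp u) \<beta> = poly (Fp v) \<beta>\<close>
        by (simp add: Fp_def)
    qed
    have "Fp u - Fp v = 0"
    proof (rule ccontr)
      assume nz: "Fp u - Fp v \<noteq> 0"
      have "card {x. poly (Fp u - Fp v) x = 0} \<le> degree (Fp u - Fp v)"
        by (rule card_poly_roots_bound[OF nz])
      also have "\<dots> \<le> max (degree (Fp u)) (degree (Fp v))" by (rule degree_diff_le_max)
      also have "\<dots> \<le> 2 * N" using degree_F[of "{1..N}" u] degree_F[of "{1..N}" v] uv(1,2)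
        by (simp add: Fp_def U_def)
      finally have c1: "card {x. poly (Fp u - Fp v) x = 0} \<le> 2 * N" .
      have "(\<lambda>k. \<beta>^(q^k)) ` {..<2*n} \<subseteq> {x. poly (Fp u - Fp v) x = 0}" using rt by auto
      then have "card ((\<lambda>k. \<beta>^(q^k)) ` {..<2*n}) \<le> card {x. poly (Fp u - Fp v) x = 0}"
        by (intro card_mono) auto
      moreover have "card ((\<lambda>k. \<beta>^(q^k)) ` {..<2*n}) = 2*n" using injb by (simp add: card_image)
      ultimately show False using c1 NN by simp
    qed
    then have "Fp u = Fp v" by simp
    then have fe: "(\<Prod>j\<in>{1..N}. (1 + monom (1::'a) (2*j))^(u j)) = (\<Prod>j\<in>{1..N}. (1 + monom 1 (2*j))^(v j))"
      unfolding Fp_def .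
    have p1: "p > 1" using prime_gt_1_nat[OF assms(1)] .
    have uU: "(\<forall>j. (j < 1 \<or> N < j) \<longrightarrow> u j = 0) \<and> (\<forall>j\<in>{1..N}. u j \<le> p - 1)"
      using uv(1) unfolding U_def mem_Collect_eq by (elim conjE) (intro conjI)
    have vU: "(\<forall>j. (j < 1 \<or> N < j) \<longrightarrow> v j = 0) \<and> (\<forall>j\<in>{1..N}. v j \<le> p - 1)"
      using uv(2) unfolding U_def mem_Collect_eq by (elim conjE) (intro conjI)
    have lt: "\<forall>j\<in>{1..N}. u j < CHAR('a) \<and> v j < CHAR('a)"
    proof
      fix j assume j: "j \<in> {1..N}"
      have "u j \<le> p - 1" "v j \<le> p - 1" using uU vU j by auto
      then show "u j < CHAR('a) \<and> v j < CHAR('a)" unfolding assms(4) using p1 by linarith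
    qed
    have "\<forall>j\<in>{1..N}. u j = v j" by (rule F_inj[OF lt fe])
    then have eqj: "u j = v j" if "j \<in> {1..N}" for j using that by blast
    have z: "\<forall>j. (j < 1 \<or> N < j) \<longrightarrow> u j = 0" "\<forall>j. (j < 1 \<or> N < j) \<longrightarrow> v j = 0"
      using uU vU by auto
    show "u = v"
    proof
      fix j show "u j = v j"
      proof (cases "j \<in> {1..N}")
        case True then show ?thesis by (rule eqj)
      next
        case False then have "j < 1 \<or> N < j" by (simp only: atLeastAtMost_iff not_le de_Morgan_conj)
        then have "u j = 0" "v j = 0" using z(1)[rule_format, of j] z(2)[rule_format, of j] by simp_all
        then show ?thesis by simp
      qed
    qed
  qed
  have sub: "E ` U \<subseteq> B" using EB by blast
  have finB: "finite B" unfolding B_def by simp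
  have "card U \<le> card B" by (rule card_inj_on_le[OF inj sub finB])
  also have "card B \<le> L" unfolding B_def using card_image_le[of "{..<L}"] by simp
  finally show ?thesis unfolding part_count_def U_def N_def L_def \<alpha>_def .
qed

end
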